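(* Let $(X,d)$ be a sequentially right $K$-complete quasi-pseudometric space and $\varphi:X\to\mathbb{R}\cup\{\infty\}$ a proper, bounded below, lower semicontinuous function. Let $\varepsilon,\lambda>0$ and let $x_0\in X$ satisfy $\varphi(x_0)\le\varepsilon+\inf\varphi(X)$. Put $\gamma=\varepsilon/\lambda$ and, for $x\in X$, $S_\gamma(x)=\{y\in X:\varphi(y)+\gamma d(y,x)\le\varphi(x)\}$. Then there exists $z\in X$ such that (i) $\varphi(z)+\frac{\varepsilon}{\lambda}d(z,x_0)\le\varphi(x_0)$ (so $\varphi(z)\le\varphi(x_0)$); (ii) $d(z,x_0)\le\lambda$; (iii) $\varphi(y)=\varphi(z)$ for all $y\in S_\gamma(z)$; (iv) $\varphi(z)<\varphi(x)+\frac{\varepsilon}{\lambda}d(x,z)$ for all $x\in X\setminus S_\gamma(z)$.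
   Context: A quasi-pseudometric on $X$ is $d:X\times X\to[0,\infty)$ with $d(x,x)=0$ and $d(x,z)\le d(x,y)+d(y,z)$ (no symmetry). Topology $\tau_d$: neighbourhood base at $x$ given by $\{y:d(x,y)<r\}$, $r>0$; $x_n\to x$ iff $d(x,x_n)\to0$. A sequence $(x_n)$ is right $K$-Cauchy if for every $\varepsilon>0$ there is $n_\varepsilon$ with $d(x_{n+k},x_n)<\varepsilon$ for all $n\ge n_\varepsilon$, $k\in\mathbb{N}$; $X$ is sequentially right $K$-complete if every right $K$-Cauchy sequence converges. $\varphi$ is proper if it is finite somewhere; lower semicontinuous if $\varphi(x)\le\liminf_n\varphi(x_n)$ whenever $x_n\to x$. *)

theory Defs
  imports "HOL-Analysis.Analysis"
begin

definition quasi_pseudometric :: "('a \<Rightarrow> 'a \<Rightarrow> real) \<Rightarrow> bool" where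
  "quasi_pseudometric d \<longleftrightarrow>
     (\<forall>x y. 0 \<le> d x y) \<and> (\<forall>x. d x x = 0) \<and> (\<forall>x y z. d x z \<le> d x y + d y z)"

text \<open>Convergence in the topology tau_d: x_n converges to x iff d(x, x_n) tends to 0.\<close>
definition qconv :: "('a \<Rightarrow> 'a \<Rightarrow> real) \<Rightarrow> (nat \<Rightarrow> 'a) \<Rightarrow> 'a \<Rightarrow> bool" where
  "qconv d xs x \<longleftrightarrow> (\<lambda>n. d x (xs n)) \<longlonglongrightarrow> 0"

definition right_K_Cauchy :: "('a \<Rightarrow> 'a \<Rightarrow> real) \<Rightarrow> (nat \<Rightarrow> 'a) \<Rightarrow> bool" where
  "right_K_Cauchy d xs \<longleftrightarrow>
     (\<forall>e>0. \<exists>N. \<forall>n\<ge>N. \<forall>k. d (xs (n + k)) (xs n) < e)"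

definition seq_right_K_complete :: "('a \<Rightarrow> 'a \<Rightarrow> real) \<Rightarrow> bool" where
  "seq_right_K_complete d \<longleftrightarrow> (\<forall>xs. right_K_Cauchy d xs \<longrightarrow> (\<exists>x. qconv d xs x))"

definition proper_fun :: "('a \<Rightarrow> ereal) \<Rightarrow> bool" where
  "proper_fun \<phi> \<longleftrightarrow> (\<exists>x. \<phi> x < \<infinity>)"

definition bounded_below_fun :: "('a \<Rightarrow> ereal) \<Rightarrow> bool" where
  "bounded_below_fun \<phi> \<longleftrightarrow> (\<exists>m::real. \<forall>x. ereal m \<le> \<phi> x)"

definition q_lsc :: "('a \<Rightarrow> 'a \<Rightarrow> real) \<Rightarrow> ('a \<Rightarrow> ereal) \<Rightarrow> bool" where
  "q_lsc d \<phi> \<longleftrightarrow>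
     (\<forall>xs x. qconv d xs x \<longrightarrow> \<phi> x \<le> liminf (\<lambda>n. \<phi> (xs n)))"

definition S_gamma :: "('a \<Rightarrow> 'a \<Rightarrow> real) \<Rightarrow> ('a \<Rightarrow> ereal) \<Rightarrow> real \<Rightarrow> 'a \<Rightarrow> 'a set" where
  "S_gamma d \<phi> \<gamma> x = {y. \<phi> y + ereal (\<gamma> * d y x) \<le> \<phi> x}"

end

theory Submission
  imports Defs
begin

theorem theorem3p4:
  fixes d :: "'a \<Rightarrow> 'a \<Rightarrow> real" and \<phi> :: "'a \<Rightarrow> ereal"
    and eps lam :: real and x0 :: 'a
  assumes "quasi_pseudometric d"
    and "seq_right_K_complete d"
    and "\<forall>x. \<phi> x \<noteq> -\<infinity>"
    and "proper_fun \<phi>"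
    and "bounded_below_fun \<phi>"
    and "q_lsc d \<phi>"
    and "eps > 0" and "lam > 0"
    and "\<phi> x0 \<le> ereal eps + (INF x. \<phi> x)"
  shows "\<exists>z. \<phi> z + ereal ((eps / lam) * d z x0) \<le> \<phi> x0
           \<and> d z x0 \<le> lam
           \<and> (\<forall>y\<in>S_gamma d \<phi> (eps / lam) z. \<phi> y = \<phi> z)
           \<and> (\<forall>x\<in>UNIV - S_gamma d \<phi> (eps / lam) z.
                 \<phi> z < \<phi> x + ereal ((eps / lam) * d x z))"
proof -
  define g where "g = eps / lam"
  define f where "f = (\<lambda>x. real_of_ereal (\<phi> x))"
  have g0: "g > 0" using assms(7,8) unfolding g_def by simp
  have fin: "\<phi> y = ereal (f y)" if "\<phi> y \<noteq> \<infinity>" for y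
    using that assms(3) unfolding f_def by (cases "\<phi> y") auto
  from assms(5) obtain m where m: "\<And>x. ereal m \<le> \<phi> x"
    unfolding bounded_below_fun_def by blast
  have fm: "m \<le> f y" if "\<phi> y \<noteq> \<infinity>" for y
    using m[of y] fin[OF that] by simp
  have dpos: "\<And>x y. 0 \<le> d x y" and dtri: "\<And>x y z. d x z \<le> d x y + d y z"
    and drefl: "\<And>x. d x x = 0"
    using assms(1) unfolding quasi_pseudometric_def by auto
  define S where "S x = {y. \<phi> y \<noteq> \<infinity> \<and> f y + g * d y x \<le> f x}" for x
  have Srefl: "x \<in> S x" if "\<phi> x \<noteq> \<infinity>" for x
    using that drefl unfolding S_def by simp
  have Strans: "w \<in> S x" if "y \<in> S x" "w \<in> S y" for x y w
  proof -
    have "g * d w x \<le> g * d w y + g * d y x"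
      using mult_left_mono[OF dtri[of w x y], of g] g0 by (simp add: algebra_simps)
    then show ?thesis using that unfolding S_def by auto
  qed
  have Sgam: "S_gamma d \<phi> g x = S x" if "\<phi> x \<noteq> \<infinity>" for x
  proof (intro set_eqI iffI)
    fix y assume "y \<in> S_gamma d \<phi> g x"
    hence h: "\<phi> y + ereal (g * d y x) \<le> ereal (f x)" unfolding S_gamma_def using fin[OF that] by simp
    hence yf: "\<phi> y \<noteq> \<infinity>" by auto
    have "\<phi> y + ereal (g * d y x) = ereal (f y + g * d y x)" using fin[OF yf] by simp
    with h have "ereal (f y + g * d y x) \<le> ereal (f x)" by simp
    then show "y \<in> S x" unfolding S_def using yf by simp
  next
    fix y assume "y \<in> S x"
    hence yf: "\<phi> y \<noteq> \<infinity>" and yl: "f y + g * d y x \<le> f x" unfolding S_def by auto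
    have "\<phi> y + ereal (g * d y x) = ereal (f y + g * d y x)" using fin[OF yf] by simp
    then show "y \<in> S_gamma d \<phi> g x" unfolding S_gamma_def using fin[OF that] yl by simp
  qed
  have ex: "\<exists>y. y \<in> S x \<and> (\<forall>w\<in>S x. f y \<le> f w + e)" if "\<phi> x \<noteq> \<infinity>" "e > 0" for x e
  proof -
    have ne: "f ` S x \<noteq> {}" using Srefl[OF that(1)] by blast
    have bb: "bdd_below (f ` S x)" unfolding bdd_below_def S_def using fm by blast
    have "Inf (f ` S x) < Inf (f ` S x) + e" using that by simp
    from cInf_lessD[OF ne this] obtain y where y: "y \<in> S x" "f y < Inf (f ` S x) + e" by blast
    have "\<forall>w\<in>S x. f y \<le> f w + e"
    proof
      fix w assume "w \<in> S x"
      hence "Inf (f ` S x) \<le> f w" using cInf_lower[OF _ bb] by blast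
      thus "f y \<le> f w + e" using y by simp
    qed
    with y show ?thesis by blast
  qed
  define e where "e n = inverse (real (Suc n))" for n
  have e0: "e n > 0" for n unfolding e_def by simp
  define nxt where "nxt x n = (SOME y. y \<in> S x \<and> (\<forall>w\<in>S x. f y \<le> f w + e n))" for x n
  define xs where "xs = rec_nat x0 (\<lambda>n x. nxt x n)"
  have xs0: "xs 0 = x0" and xsS: "\<And>n. xs (Suc n) = nxt (xs n) n"
    unfolding xs_def by simp_all
  obtain p where p: "\<phi> p < \<infinity>" using assms(4) unfolding proper_fun_def by blast
  have "\<phi> x0 \<le> ereal eps + \<phi> p"
    using assms(9) add_left_mono[OF INF_lower[of p UNIV \<phi>], of "ereal eps"] by auto
  hence x0fin: "\<phi> x0 \<noteq> \<infinity>" using p by auto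
  have nxtP: "nxt x n \<in> S x \<and> (\<forall>w\<in>S x. f (nxt x n) \<le> f w + e n)" if "\<phi> x \<noteq> \<infinity>" for x n
    unfolding nxt_def by (rule someI_ex[OF ex[OF that e0]])
  have xsfin: "\<phi> (xs n) \<noteq> \<infinity>" for n
  proof (induction n)
    case 0 then show ?case using xs0 x0fin by simp
  next
    case (Suc n) then show ?case using nxtP[OF Suc] xsS[of n] unfolding S_def by simp
  qed
  have P1: "xs (Suc n) \<in> S (xs n)" and P2: "\<And>w. w \<in> S (xs n) \<Longrightarrow> f (xs (Suc n)) \<le> f w + e n" for n
    using nxtP[OF xsfin[of n], of n] xsS[of n] by auto
  have mono: "xs (n + k) \<in> S (xs n)" for n k
  proof (induction k)
    case 0 then show ?case using Srefl[OF xsfin] by simp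
  next
    case (Suc k) then show ?case using Strans[OF Suc P1[of "n+k"]] by simp
  qed
  have dec: "decseq (\<lambda>n. f (xs n))"
  proof (rule decseq_SucI)
    fix n
    have "f (xs (Suc n)) + g * d (xs (Suc n)) (xs n) \<le> f (xs n)" using P1[of n] unfolding S_def by simp
    moreover have "0 \<le> g * d (xs (Suc n)) (xs n)" using g0 dpos by simp
    ultimately show "f (xs (Suc n)) \<le> f (xs n)" by linarith
  qed
  obtain L where L: "(\<lambda>n. f (xs n)) \<longlonglongrightarrow> L" and Lle: "\<And>n. L \<le> f (xs n)"
    using decseq_convergent[OF dec, of m] fm xsfin by blast
  have stepk: "g * d (xs (n + k)) (xs n) \<le> f (xs n) - f (xs (n + k))" for n k
    using mono[of n k] unfolding S_def by simp
  have "right_K_Cauchy d xs"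
    unfolding right_K_Cauchy_def
  proof (intro allI impI)
    fix \<epsilon> :: real assume "\<epsilon> > 0"
    hence "g * \<epsilon> > 0" using g0 by simp
    from LIMSEQ_D[OF L this] obtain N where N: "\<And>n. n \<ge> N \<Longrightarrow> norm (f (xs n) - L) < g * \<epsilon>" by blast
    have "d (xs (n + k)) (xs n) < \<epsilon>" if "n \<ge> N" for n k
    proof -
      have "g * d (xs (n + k)) (xs n) < g * \<epsilon>"
        using stepk[of n k] Lle[of "n+k"] N[OF that] by simp
      thus ?thesis using g0 by simp
    qed
    thus "\<exists>N. \<forall>n\<ge>N. \<forall>k. d (xs (n + k)) (xs n) < \<epsilon>" by blast
  qed
  then obtain z where "qconv d xs z" using assms(2) unfolding seq_right_K_complete_def by blast
  hence dz: "(\<lambda>n. d z (xs n)) \<longlonglongrightarrow> 0" unfolding qconv_def .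
  have "\<phi> z \<le> liminf (\<lambda>n. \<phi> (xs n))" using assms(6) \<open>qconv d xs z\<close> unfolding q_lsc_def by blast
  also have "(\<lambda>n. \<phi> (xs n)) = (\<lambda>n. ereal (f (xs n)))" using fin xsfin by auto
  also have "liminf (\<lambda>n. ereal (f (xs n))) = ereal L"
    by (rule lim_imp_Liminf) (auto intro: L)
  finally have zL: "\<phi> z \<le> ereal L" .
  hence zfin: "\<phi> z \<noteq> \<infinity>" by auto
  have fzL: "f z \<le> L" using zL fin[OF zfin] by simp
  have zS: "z \<in> S (xs n)" for n
  proof -
    have lim: "(\<lambda>k. g * d z (xs (k + n)) + (f (xs n) - f (xs (k + n)))) \<longlonglongrightarrow> g * 0 + (f (xs n) - L)"
      by (intro tendsto_intros LIMSEQ_ignore_initial_segment dz L)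
    have "g * d z (xs n) \<le> g * 0 + (f (xs n) - L)"
    proof (rule LIMSEQ_le_const[OF lim], intro exI allI impI)
      fix k
      have "g * d z (xs n) \<le> g * d z (xs (n + k)) + g * d (xs (n + k)) (xs n)"
        using mult_left_mono[OF dtri[of z "xs n" "xs (n+k)"], of g] g0 by (simp add: algebra_simps)
      thus "g * d z (xs n) \<le> g * d z (xs (k + n)) + (f (xs n) - f (xs (k + n)))"
        using stepk[of n k] by (simp add: add.commute)
    qed
    thus ?thesis unfolding S_def using zfin fzL by simp
  qed
  have key: "f y = f z" if "y \<in> S z" for y
  proof -
    have yS: "y \<in> S (xs n)" for n using Strans[OF zS that] .
    have lim: "(\<lambda>n. f y + e n) \<longlonglongrightarrow> f y + 0"
      unfolding e_def by (intro tendsto_intros LIMSEQ_inverse_real_of_nat)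
    have "L \<le> f y + 0"
    proof (rule LIMSEQ_le_const[OF lim], intro exI allI impI)
      fix n
      show "L \<le> f y + e n" using Lle[of "Suc n"] P2[OF yS[of n]] by simp
    qed
    moreover have "f y + g * d y z \<le> f z" using that unfolding S_def by simp
    moreover have "0 \<le> g * d y z" using g0 dpos by simp
    ultimately show ?thesis using fzL by linarith
  qed
  have zx0: "f z + g * d z x0 \<le> f x0" using zS[of 0] xs0 unfolding S_def by simp
  have "\<phi> x0 \<le> ereal eps + \<phi> z"
    using assms(9) add_left_mono[OF INF_lower[of z UNIV \<phi>], of "ereal eps"] by auto
  hence "f x0 \<le> eps + f z" using fin[OF x0fin] fin[OF zfin] by simp
  hence "g * d z x0 \<le> eps" using zx0 by simp
  hence "d z x0 \<le> lam" using assms(7,8) unfolding g_def by (simp add: field_simps)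
  moreover have "\<phi> z + ereal (g * d z x0) \<le> \<phi> x0"
    using zx0 fin[OF x0fin] fin[OF zfin] by simp
  moreover have "\<forall>y\<in>S_gamma d \<phi> g z. \<phi> y = \<phi> z"
  proof
    fix y assume "y \<in> S_gamma d \<phi> g z"
    hence "y \<in> S z" using Sgam[OF zfin] by simp
    moreover from this have yf: "\<phi> y \<noteq> \<infinity>" unfolding S_def by simp
    ultimately show "\<phi> y = \<phi> z" using key fin[OF yf] fin[OF zfin] by simp
  qed
  moreover have "\<forall>x\<in>UNIV - S_gamma d \<phi> g z. \<phi> z < \<phi> x + ereal (g * d x z)"
    unfolding S_gamma_def by (auto simp: not_le)
  ultimately show ?thesis unfolding g_def by blast
qed

end
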